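(* Let $\bm y\sim N_n(\bm X\bm\beta,\sigma^2\bm I_n)$ with $\bm X=[\bm x_1,\dots,\bm x_p]\in\mathbb{R}^{n\times p}$ deterministic of full column rank, and let $\mathcal H_0=\{j:\beta_j=0\}$. Let $\bm W=(W_1,\dots,W_p)=\bm W(\bm y)$ be a fixed measurable function of $\bm y$ (the one-at-a-time knockoff statistics, with knockoff randomness held fixed). Fix $\beta\in(0,1)$, $c\ge0$, and for a statistic vector $\bm W$ let $T_\beta=\min\{t:\frac{c+\#\{\ell:W_\ell\le -t\}}{1\vee\#\{\ell:W_\ell\ge t\}}\le\beta\}$. For each $j$, let $\bm G_j=(\bm X_{\backslash j}^\top\bm y,\|\bm y\|^2)$, where $\bm X_{\backslash j}$ is $\bm X$ without column $j$, and for $t\ge0$ define $$\phi_j(t;\bm G_j)=\mathbb{E}\Big[\frac{\mathbf{1}\{tW_j'\ge T_\beta'\}}{c+\sum_{\ell\in[p]}\mathbf{1}\{W_\ell'\le -T_\beta'\}}-\frac{\mathbf{1}\{W_j'\le -T_\beta'\}}{\sum_{\ell\in[p]}\mathbf{1}\{W_\ell'\le -T_\beta'\}}\,\Big|\,\bm G_j\Big],$$ where $\bm W'=\bm W(\bm y')$, $T_\beta'$ is the threshold computed from $\bm W'$, and $\bm y'$ is drawn from the conditional distribution of $\bm y$ given $\bm G_j$ under the hypothesis $\beta_j=0$ (which does not depend on the remaining unknown parameters). Let $\hat t_j=\sup\{t\ge0:\phi_j(t;\bm G_j)\le0\}$, and set $e_j=\frac{p\,\mathbf{1}\{\hat t_jW_j\ge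 T_\beta\}}{c+\sum_{\ell}\mathbf{1}\{W_\ell\le -T_\beta\}}$ if $\phi_j(\hat t_j;\bm G_j)\le0$ and $e_j=\frac{p\,\mathbf{1}\{\hat t_jW_j> T_\beta\}}{c+\sum_{\ell}\mathbf{1}\{W_\ell\le -T_\beta\}}$ otherwise, where $\bm W,T_\beta$ are computed from the observed $\bm y$. Then $\sum_{j\in\mathcal H_0}\mathbb{E}[e_j]\le p$, and the eBH procedure applied to $e_1,\dots,e_p$ at level $\alpha\in(0,1)$ has false discovery rate at most $\alpha$.
   Context: Convention: $0/0=0$. The eBH procedure at level $\alpha$: sort $e_{\pi(1)}\ge\dots\ge e_{\pi(p)}$, let $\hat k=\max\{k\in[p]:k e_{\pi(k)}/p\ge1/\alpha\}$ (zero if the set is empty), and reject $\{\pi(k):k\le\hat k\}$. For a rejection set $\widehat S$, $\mathrm{FDP}=|\widehat S\cap\mathcal H_0|/(|\widehat S|\vee1)$ and the false discovery rate is $\mathbb{E}[\mathrm{FDP}]$. *)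

theory Defs
  imports "HOL-Analysis.Analysis" "HOL-Probability.Probability"
begin

definition iso_gauss :: "real^'n \<Rightarrow> real \<Rightarrow> (real^'n) measure" where
  "iso_gauss mu s = density lborel
     (\<lambda>y. ennreal ((2 * pi * s^2) powr (- real CARD('n) / 2) * exp (- ((dist y mu) ^ 2) / (2 * s ^ 2))))"

text \<open>G_j(y) = (X_{-j}^T y, ||y||^2); the j-th coordinate of the first component is set to 0
  (the entries l \<noteq> j are the inner products x_l . y).\<close>
definition Gstat :: "real^'p^'n \<Rightarrow> 'p \<Rightarrow> real^'n \<Rightarrow> (real^'p) \<times> real" where
  "Gstat X j y = ((\<chi> l. if l = j then 0 else (transpose X *v y) $ l), (norm y)^2)"

text \<open>Knockoff threshold T_q (q = the knockoff level beta); +infinity if no admissible t.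
  As in the knockoff filter, t ranges over the nonzero magnitudes |W_l|.\<close>
definition knock_T :: "real \<Rightarrow> real \<Rightarrow> real^'p \<Rightarrow> ereal" where
  "knock_T q c w = Inf (ereal ` {t. t \<in> (\<lambda>l. \<bar>w $ l\<bar>) ` UNIV \<and> t > 0 \<and>
      (c + real (card {l. w $ l \<le> - t}))
        / real (max 1 (card {l. w $ l \<ge> t})) \<le> q})"

definition neg_count :: "real \<Rightarrow> real \<Rightarrow> real^'p \<Rightarrow> nat" where
  "neg_count q c w = card {l. ereal (w $ l) \<le> - knock_T q c w}"

definition ko_term :: "real \<Rightarrow> real \<Rightarrow> ereal \<Rightarrow> 'p \<Rightarrow> real^'p \<Rightarrow> real" where
  "ko_term q c t j w =
     (if t * ereal (w $ j) \<ge> knock_T q c w then 1 else 0) / (c + real (neg_count q c w))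
   - (if ereal (w $ j) \<le> - knock_T q c w then 1 else 0) / real (neg_count q c w)"

text \<open>phi_j(t; g), with K j g the conditional law of y' given G_j = g under beta_j = 0.\<close>
definition phi :: "('p \<Rightarrow> (real^'p) \<times> real \<Rightarrow> (real^'n) measure) \<Rightarrow> (real^'n \<Rightarrow> real^'p)
    \<Rightarrow> real \<Rightarrow> real \<Rightarrow> 'p \<Rightarrow> ereal \<Rightarrow> (real^'p) \<times> real \<Rightarrow> real" where
  "phi K W q c j t g = (\<integral>y'. ko_term q c t j (W y') \<partial>(K j g))"

definition t_hat :: "('p \<Rightarrow> (real^'p) \<times> real \<Rightarrow> (real^'n) measure) \<Rightarrow> (real^'n \<Rightarrow> real^'p)
    \<Rightarrow> real \<Rightarrow> real \<Rightarrow> 'p \<Rightarrow> (real^'p) \<times> real \<Rightarrow> ereal" where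
  "t_hat K W q c j g = Sup (ereal ` {t. t \<ge> 0 \<and> phi K W q c j (ereal t) g \<le> 0})"

definition evalue :: "real^'p^'n \<Rightarrow> ('p \<Rightarrow> (real^'p) \<times> real \<Rightarrow> (real^'n) measure) \<Rightarrow> (real^'n \<Rightarrow> real^'p)
    \<Rightarrow> real \<Rightarrow> real \<Rightarrow> 'p \<Rightarrow> real^'n \<Rightarrow> real" where
  "evalue X K W q c j y =
     (let g = Gstat X j y; th = t_hat K W q c j g; w = W y; T = knock_T q c w;
          D = c + real (neg_count q c w)
      in if phi K W q c j th g \<le> 0
         then real CARD('p) * (if th * ereal (w $ j) \<ge> T then 1 else 0) / D
         else real CARD('p) * (if th * ereal (w $ j) > T then 1 else 0) / D)"

definition sort_desc :: "('p::finite \<Rightarrow> real) \<Rightarrow> nat \<Rightarrow> 'p" where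
  "sort_desc e = (SOME pi. bij_betw pi {1..CARD('p)} UNIV \<and>
      (\<forall>i\<in>{1..CARD('p)}. \<forall>k\<in>{1..CARD('p)}. i \<le> k \<longrightarrow> e (pi k) \<le> e (pi i)))"

definition ebh_khat :: "real \<Rightarrow> ('p::finite \<Rightarrow> real) \<Rightarrow> nat" where
  "ebh_khat a e = Max ({0} \<union> {k \<in> {1..CARD('p)}.
      real k * e (sort_desc e k) / real CARD('p) \<ge> 1 / a})"

definition ebh :: "real \<Rightarrow> ('p::finite \<Rightarrow> real) \<Rightarrow> 'p set" where
  "ebh a e = sort_desc e ` {1..ebh_khat a e}"

definition fdp :: "'p set \<Rightarrow> 'p set \<Rightarrow> real" where
  "fdp H0 S = real (card (S \<inter> H0)) / real (max 1 (card S))"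

end

theory Submission
  imports Defs
begin


lemma vec_nth_meas[measurable]: "(\<lambda>x::real^'n. x $ i) \<in> borel_measurable borel"
  by (intro borel_measurable_continuous_onI continuous_intros)

lemma real_card_sum: "real (card {l::'p::finite. P l}) = (\<Sum>l\<in>UNIV. if P l then 1 else 0)"
  by (simp add: sum.If_cases)

lemma borel_snd[measurable]: "snd \<in> (borel :: ('a::second_countable_topology \<times> 'b::second_countable_topology) measure) \<rightarrow>\<^sub>M borel"
  by (subst borel_prod[symmetric]) (rule measurable_snd)
lemma borel_fst[measurable]: "fst \<in> (borel :: ('a::second_countable_topology \<times> 'b::second_countable_topology) measure) \<rightarrow>\<^sub>M borel"
  by (subst borel_prod[symmetric]) (rule measurable_fst)

lemma knock_T_alt0:
  "knock_T q c w = (INF l. if 0 < \<bar>w $ l\<bar> \<and> (c + real (card {m. w $ m \<le> - \<bar>w $ l\<bar>}))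
        / real (max 1 (card {m. w $ m \<ge> \<bar>w $ l\<bar>})) \<le> q then ereal \<bar>w $ l\<bar> else \<infinity>)"
  (is "?L = ?R")
proof (rule antisym)
  show "?R \<le> ?L" unfolding knock_T_def
  proof (rule Inf_greatest)
    fix x assume "x \<in> ereal ` {t. t \<in> (\<lambda>l. \<bar>w $ l\<bar>) ` UNIV \<and> t > 0 \<and>
      (c + real (card {l. w $ l \<le> - t})) / real (max 1 (card {l. w $ l \<ge> t})) \<le> q}"
    then obtain l where "x = ereal \<bar>w $ l\<bar>" "0 < \<bar>w $ l\<bar>" "(c + real (card {m. w $ m \<le> - \<bar>w $ l\<bar>}))
        / real (max 1 (card {m. w $ m \<ge> \<bar>w $ l\<bar>})) \<le> q" by auto
    then show "?R \<le> x" by (intro INF_lower2[of l]) auto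
  qed
next
  show "?L \<le> ?R" unfolding knock_T_def
    by (rule INF_greatest) (auto intro!: Inf_lower)
qed

lemma knock_T_alt:
  "knock_T q c w = (INF l. if 0 < \<bar>w $ l\<bar> \<and> (c + (\<Sum>la\<in>UNIV. if w$la \<le> - \<bar>w$l\<bar>  then 1 else 0::real)) / max 1 (\<Sum>la\<in>UNIV. if \<bar>w$l\<bar> \<le> w$la then 1 else 0::real) \<le> q then ereal \<bar>w $ l\<bar> else \<infinity>)"
  unfolding knock_T_alt0 real_card_sum of_nat_max of_nat_1 ..

lemma knock_T_piece_meas: "(\<lambda>x::real^'p. if 0 < \<bar>x$l\<bar> \<and> (c + (\<Sum>la\<in>UNIV. if x$la \<le> - \<bar>x$l\<bar>  then 1 else 0::real)) / max 1 (\<Sum>la\<in>UNIV. if \<bar>x$l\<bar> \<le> x$la then 1 else 0::real) \<le> q then ereal \<bar>x$l\<bar> else \<infinity>) \<in> borel_measurable borel"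
  by measurable

lemma knock_T_meas[measurable]: "knock_T q c \<in> borel_measurable (borel :: (real^'p) measure)"
  unfolding knock_T_alt
  by (rule borel_measurable_INF) (simp_all add: knock_T_piece_meas)

lemma knock_T_meas'[measurable (raw)]:
  "f \<in> borel_measurable M \<Longrightarrow> (\<lambda>x. knock_T q c (f x :: real^'p)) \<in> borel_measurable M"
  using measurable_compose[OF _ knock_T_meas] .

lemma neg_count_real: "real (neg_count q c w) = (\<Sum>l\<in>UNIV. if ereal (w$l) \<le> - knock_T q c w then 1 else 0)"
  unfolding neg_count_def by (rule real_card_sum)

definition negc :: "real \<Rightarrow> real \<Rightarrow> real^'p \<Rightarrow> real" where
  "negc q c w = real (neg_count q c w)"

lemma negc_meas: "negc q c \<in> borel_measurable borel"
  unfolding negc_def neg_count_real by measurable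

lemma negc_meas'[measurable (raw)]:
  "f \<in> borel_measurable M \<Longrightarrow> (\<lambda>x. negc q c (f x :: real^'p)) \<in> borel_measurable M"
  using measurable_compose[OF _ negc_meas] .

lemma ko_term_alt: "ko_term q c t j w =
     (if t * ereal (w $ j) \<ge> knock_T q c w then 1 else 0) / (c + negc q c w)
   - (if ereal (w $ j) \<le> - knock_T q c w then 1 else 0) / negc q c w"
  unfolding ko_term_def negc_def ..

lemma ko_term_meas: "(\<lambda>x. ko_term q c (fst x) j (snd x :: real^'p)) \<in> borel_measurable borel"
  unfolding ko_term_alt by measurable


lemma knock_T_pos: "0 < knock_T q c (w::real^'p)"
proof -
  let ?f = "\<lambda>l. if 0 < \<bar>w $ l\<bar> \<and> (c + real (card {m. w $ m \<le> - \<bar>w $ l\<bar>}))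
        / real (max 1 (card {m. w $ m \<ge> \<bar>w $ l\<bar>})) \<le> q then ereal \<bar>w $ l\<bar> else \<infinity>"
  have "knock_T q c w = Inf (?f ` UNIV)" unfolding knock_T_alt0 ..
  also have "\<dots> = Min (?f ` UNIV)" by (rule Min_Inf[symmetric]) auto
  also have "\<dots> \<in> ?f ` UNIV" by (rule Min_in) auto
  finally obtain l where "knock_T q c w = ?f l" by blast
  then show ?thesis by (auto split: if_splits)
qed

lemma ko_term_meas'[measurable (raw)]:
  "f \<in> M \<rightarrow>\<^sub>M borel \<Longrightarrow> g \<in> borel_measurable M \<Longrightarrow> (\<lambda>x. ko_term q c (f x) j (g x :: real^'p)) \<in> borel_measurable M"
  using measurable_compose[OF borel_measurable_Pair ko_term_meas, of f M g] by simp

lemma integral_measurable_kernel: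
  fixes f :: "'a \<Rightarrow> 'b \<Rightarrow> real"
  assumes f[measurable]: "(\<lambda>(x, y). f x y) \<in> borel_measurable (M \<Otimes>\<^sub>M N)"
  assumes L[measurable]: "L \<in> measurable M (subprob_algebra N)"
  shows "(\<lambda>x. integral\<^sup>L (L x) (f x)) \<in> borel_measurable M"
proof -
  note integral_measurable_subprob_algebra[measurable] measurable_distr2[measurable]
  have "(\<lambda>x. integral\<^sup>L (distr (L x) (M \<Otimes>\<^sub>M N) (\<lambda>y. (x, y))) (\<lambda>(x, y). f x y)) \<in> borel_measurable M"
    by measurable
  then show ?thesis
  proof (rule measurable_cong[THEN iffD1, rotated])
    fix x assume x: "x \<in> space M"
    have [simp]: "sets (L x) = sets N" using measurable_space[OF L x] by (simp add: space_subprob_algebra)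
    have "(\<lambda>y. (x, y)) \<in> measurable (L x) (M \<Otimes>\<^sub>M N)"
      using measurable_Pair1'[OF x, of N] measurable_cong_sets[of "L x" N "M \<Otimes>\<^sub>M N" "M \<Otimes>\<^sub>M N"] by simp
    from integral_distr[OF this f] show "integral\<^sup>L (distr (L x) (M \<Otimes>\<^sub>M N) (\<lambda>y. (x, y))) (\<lambda>(x, y). f x y) = integral\<^sup>L (L x) (f x)"
      by simp
  qed
qed

lemma sup_equiv:
  fixes T th :: ereal and X :: "nat \<Rightarrow> real" and a :: real
  assumes T: "0 < T" and X0: "\<And>i. 0 < X i" and Xth: "\<And>i. ereal (X i) < th"
    and lim: "(\<lambda>i. ereal (X i)) \<longlonglongrightarrow> th"
  shows "(\<exists>i. T \<le> ereal (X i) * ereal a) \<longleftrightarrow> T < th * ereal a"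
proof
  assume "\<exists>i. T \<le> ereal (X i) * ereal a"
  then obtain i where i: "T \<le> ereal (X i) * ereal a" by blast
  have "a > 0"
  proof (rule ccontr)
    assume "\<not> a > 0"
    then have "X i * a \<le> 0" using X0[of i] by (simp add: mult_nonneg_nonpos)
    then show False using i T by (cases T) auto
  qed
  then have "ereal (X i) * ereal a < th * ereal a"
    using Xth[of i] by (intro ereal_mult_strict_right_mono) auto
  then show "T < th * ereal a" using i by simp
next
  assume lt: "T < th * ereal a"
  have th0: "0 < th" using X0[of 0] Xth[of 0] by (metis ereal_less(2) order.strict_trans)
  have "a > 0"
  proof (rule ccontr)
    assume "\<not> a > 0"
    then have "th * ereal a \<le> 0" using th0 by (cases th) (auto simp: mult_nonneg_nonpos)
    then show False using lt T by simp
  qed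
  obtain \<tau> where tau: "T = ereal \<tau>" using T lt by (cases T) auto
  have "ereal (\<tau> / a) < th"
  proof (cases th)
    case (real r)
    then have "\<tau> < r * a" using lt tau by simp
    then show ?thesis using real \<open>a > 0\<close> by (simp add: divide_less_eq)
  qed (use th0 in auto)
  then have "eventually (\<lambda>i. ereal (\<tau> / a) < ereal (X i)) sequentially"
    using order_tendstoD(1)[OF lim] by blast
  then obtain i where "ereal (\<tau> / a) < ereal (X i)" by (auto dest: eventually_happens)
  then have "\<tau> < X i * a" using \<open>a > 0\<close> by (simp add: divide_less_eq)
  then show "\<exists>i. T \<le> ereal (X i) * ereal a" using tau by (intro exI[of _ i]) simp
qed



definition Aterm :: "real \<Rightarrow> real \<Rightarrow> ereal \<Rightarrow> 'p \<Rightarrow> real^'p \<Rightarrow> real" where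
  "Aterm q c t j w = (if t * ereal (w $ j) \<ge> knock_T q c w then 1 else 0) / (c + negc q c w)"
definition Bterm :: "real \<Rightarrow> real \<Rightarrow> 'p \<Rightarrow> real^'p \<Rightarrow> real" where
  "Bterm q c j w = (if ereal (w $ j) \<le> - knock_T q c w then 1 else 0) / negc q c w"

lemma ko_term_AB: "ko_term q c t j w = Aterm q c t j w - Bterm q c j w"
  unfolding ko_term_alt Aterm_def Bterm_def ..

lemma Aterm_meas0: "(\<lambda>x. Aterm q c (fst x) j (snd x :: real^'p)) \<in> borel_measurable borel"
  unfolding Aterm_def by measurable
lemma Bterm_meas0: "(\<lambda>x. Bterm q c j (x :: real^'p)) \<in> borel_measurable borel"
  unfolding Bterm_def by measurable

lemma Aterm_meas[measurable (raw)]: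
  "f \<in> M \<rightarrow>\<^sub>M borel \<Longrightarrow> g \<in> borel_measurable M \<Longrightarrow> (\<lambda>x. Aterm q c (f x) j (g x :: real^'p)) \<in> borel_measurable M"
  using measurable_compose[OF borel_measurable_Pair Aterm_meas0, of f M g] by simp
lemma Bterm_meas[measurable (raw)]:
  "g \<in> borel_measurable M \<Longrightarrow> (\<lambda>x. Bterm q c j (g x :: real^'p)) \<in> borel_measurable M"
  using measurable_compose[OF _ Bterm_meas0] .

lemma negc_nonneg: "0 \<le> negc q c w" unfolding negc_def by simp

lemma inv_bound: assumes "c \<ge> 0" shows "\<bar>1 / (c + negc q c w)\<bar> \<le> 1 + 1 / c"
proof (cases "negc q c w = 0")
  case True then show ?thesis using assms by simp
next
  case False
  then have "negc q c w \<ge> 1" unfolding negc_def by simp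
  then have "c + negc q c w \<ge> 1" using assms by simp
  then have "\<bar>1 / (c + negc q c w)\<bar> \<le> 1" by simp
  also have "1 \<le> 1 + 1 / c" using assms by simp
  finally show ?thesis .
qed

lemma Aterm_bound: assumes "c \<ge> 0" shows "\<bar>Aterm q c t j w\<bar> \<le> 1 + 1 / c"
  using inv_bound[OF assms, of q w] assms unfolding Aterm_def by (auto simp: abs_mult)

lemma Aterm_nonneg: assumes "c \<ge> 0" shows "0 \<le> Aterm q c t j w"
  unfolding Aterm_def using assms negc_nonneg[of q c w] by simp

lemma Bterm_nonneg: "0 \<le> Bterm q c j w"
  unfolding Bterm_def using negc_nonneg[of q c w] by simp

lemma Bterm_bound: "\<bar>Bterm q c j w\<bar> \<le> 1"
proof (cases "negc q c w = 0")
  case False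
  then have "negc q c w \<ge> 1" unfolding negc_def by simp
  then show ?thesis unfolding Bterm_def by auto
qed (simp add: Bterm_def)

lemma Aterm_zero: "Aterm q c 0 j w = 0"
  using knock_T_pos[of q c w] unfolding Aterm_def by auto

lemma Aterm_mono: assumes "c \<ge> 0" "0 \<le> t" "t \<le> s" shows "Aterm q c t j w \<le> Aterm q c s j w"
proof (cases "t * ereal (w $ j) \<ge> knock_T q c w")
  case True
  have T: "0 < knock_T q c w" by (rule knock_T_pos)
  have "w $ j > 0"
  proof (rule ccontr)
    assume "\<not> w $ j > 0"
    then have "t * ereal (w $ j) \<le> 0" using assms(2)
      by (cases t) (auto simp: mult_nonneg_nonpos)
    then show False using True T by simp
  qed
  then have "t * ereal (w $ j) \<le> s * ereal (w $ j)"
    using assms by (intro ereal_mult_right_mono) auto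
  then have "s * ereal (w $ j) \<ge> knock_T q c w" using True by simp
  then show ?thesis unfolding Aterm_def using True by simp
next
  case False
  then show ?thesis using Aterm_nonneg[OF assms(1), of q s j w] unfolding Aterm_def by simp
qed

definition EV :: "('p \<Rightarrow> (real^'p) \<times> real \<Rightarrow> (real^'n) measure) \<Rightarrow> (real^'n \<Rightarrow> real^'p)
    \<Rightarrow> real \<Rightarrow> real \<Rightarrow> 'p \<Rightarrow> (real^'p) \<times> real \<Rightarrow> real^'p \<Rightarrow> real" where
  "EV K W q c j g w =
     (let th = t_hat K W q c j g; T = knock_T q c w; D = c + negc q c w
      in if phi K W q c j th g \<le> 0
         then real CARD('p) * (if th * ereal (w $ j) \<ge> T then 1 else 0) / D
         else real CARD('p) * (if th * ereal (w $ j) > T then 1 else 0) / D)"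

lemma evalue_EV: "evalue X K W q c j y = EV K W q c j (Gstat X j y) (W y)"
  unfolding evalue_def EV_def negc_def Let_def ..

lemma EV_nonneg: "c \<ge> 0 \<Longrightarrow> 0 \<le> EV K W q c j g w"
  unfolding EV_def Let_def using negc_nonneg[of q c w] by auto

context
  fixes K :: "'p \<Rightarrow> (real^'p) \<times> real \<Rightarrow> (real^'n) measure" and W :: "real^'n \<Rightarrow> real^'p"
    and q c :: real
  assumes W_meas[measurable]: "W \<in> borel_measurable borel"
    and c_nonneg: "c \<ge> 0"
    and K_kernel: "\<And>j. K j \<in> borel \<rightarrow>\<^sub>M prob_algebra borel"
begin

lemma K_space: "prob_space (K j g) \<and> sets (K j g) = sets borel"
  using measurable_space[OF K_kernel, of g j] by (simp add: space_prob_algebra)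

lemma K_prob: "prob_space (K j g)" using K_space by blast
lemma K_sets: "sets (K j g) = sets borel" using K_space by blast

lemma meas_K: "f \<in> borel_measurable borel \<Longrightarrow> f \<in> borel_measurable (K j g)"
  using measurable_cong_sets[OF K_sets refl] by blast

lemma intA: "integrable (K j g) (\<lambda>y. Aterm q c t j (W y))"
proof -
  interpret prob_space "K j g" by (rule K_prob)
  show ?thesis
    by (rule integrable_const_bound[where B="1 + 1/c"]) (auto simp: Aterm_bound[OF c_nonneg] intro!: meas_K)
qed

lemma intB: "integrable (K j g) (\<lambda>y. Bterm q c j (W y))"
proof -
  interpret prob_space "K j g" by (rule K_prob)
  show ?thesis
    by (rule integrable_const_bound[where B="1"]) (auto simp: Bterm_bound intro!: meas_K)
qed

lemma phi_AB: "phi K W q c j t g = (\<integral>y. Aterm q c t j (W y) \<partial>K j g) - (\<integral>y. Bterm q c j (W y) \<partial>K j g)"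
  unfolding phi_def ko_term_AB by (rule Bochner_Integration.integral_diff[OF intA intB])

lemma phi_mono: "0 \<le> t \<Longrightarrow> t \<le> s \<Longrightarrow> phi K W q c j t g \<le> phi K W q c j s g"
  unfolding phi_AB using integral_mono[OF intA intA Aterm_mono[OF c_nonneg]] by simp

lemma phi_zero: "phi K W q c j 0 g \<le> 0"
  unfolding phi_AB Aterm_zero by (simp add: Bterm_nonneg)

lemma phi_meas0: "(\<lambda>x. phi K W q c j (fst x) (snd x)) \<in> borel_measurable (borel \<Otimes>\<^sub>M borel)"
  unfolding phi_def
proof (rule integral_measurable_kernel[where f="\<lambda>x y. ko_term q c (fst x) j (W y)" and N=borel])
  show "(\<lambda>(x, y). ko_term q c (fst x) j (W y)) \<in> borel_measurable ((borel \<Otimes>\<^sub>M borel) \<Otimes>\<^sub>M borel)"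
    by measurable
  show "(\<lambda>x. K j (snd x)) \<in> borel \<Otimes>\<^sub>M borel \<rightarrow>\<^sub>M subprob_algebra borel"
    using measurable_compose[OF measurable_snd measurable_prob_algebraD[OF K_kernel]] .
qed

lemma phi_meas[measurable (raw)]:
  "f \<in> M \<rightarrow>\<^sub>M borel \<Longrightarrow> g \<in> M \<rightarrow>\<^sub>M borel \<Longrightarrow> (\<lambda>x. phi K W q c j (f x) (g x)) \<in> borel_measurable M"
  using measurable_compose[OF measurable_Pair phi_meas0, of f M g] by simp

lemma t_hat_nonneg: "0 \<le> t_hat K W q c j g"
proof -
  have "ereal 0 \<in> ereal ` {t. 0 \<le> t \<and> phi K W q c j (ereal t) g \<le> 0}"
    using phi_zero[of j g] by (intro imageI) (simp add: zero_ereal_def)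
  then show ?thesis unfolding t_hat_def by (rule Sup_upper2) simp
qed

lemma t_hat_below: assumes "ereal t < t_hat K W q c j g" "0 \<le> t" shows "phi K W q c j (ereal t) g \<le> 0"
proof -
  from assms(1) obtain s where s: "0 \<le> s" "phi K W q c j (ereal s) g \<le> 0" "t < s"
    unfolding t_hat_def less_Sup_iff by auto
  have "phi K W q c j (ereal t) g \<le> phi K W q c j (ereal s) g"
    using s assms by (intro phi_mono) auto
  then show ?thesis using s by simp
qed

lemma t_hat_SUP: "t_hat K W q c j g =
  (SUP t\<in>{t. t \<in> \<rat> \<and> 0 \<le> t}. if phi K W q c j (ereal t) g \<le> 0 then ereal t else 0)" (is "?L = ?R")
proof (rule antisym)
  have R0: "0 \<le> ?R"
    using phi_zero[of j g] zero_ereal_def by (intro SUP_upper2[of 0]) auto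
  show "?L \<le> ?R" unfolding t_hat_def
  proof (rule Sup_least)
    fix x assume "x \<in> ereal ` {t. t \<ge> 0 \<and> phi K W q c j (ereal t) g \<le> 0}"
    then obtain s where s: "x = ereal s" "0 \<le> s" "phi K W q c j (ereal s) g \<le> 0" by auto
    show "x \<le> ?R"
    proof (rule ccontr)
      assume "\<not> x \<le> ?R"
      then have lt: "?R < ereal s" using s by simp
      then obtain r where r: "?R = ereal r" using R0 by (cases ?R) auto
      with lt R0 have "0 \<le> r" "r < s" by auto
      then obtain t where t: "t \<in> \<rat>" "r < t" "t < s" using Rats_dense_in_real by blast
      have "phi K W q c j (ereal t) g \<le> phi K W q c j (ereal s) g"
        using t \<open>0 \<le> r\<close> by (intro phi_mono) auto
      with s have "phi K W q c j (ereal t) g \<le> 0" by simp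
      then have "ereal t \<le> ?R" using t \<open>0 \<le> r\<close>
        by (intro SUP_upper2[of t]) auto
      then show False using r t by simp
    qed
  qed
  show "?R \<le> ?L"
  proof (rule SUP_least)
    fix t :: real assume t: "t \<in> {t. t \<in> \<rat> \<and> 0 \<le> t}"
    show "(if phi K W q c j (ereal t) g \<le> 0 then ereal t else 0) \<le> ?L"
      using t t_hat_nonneg[of j g] unfolding t_hat_def by (auto intro!: Sup_upper)
  qed
qed

lemma t_hat_meas0: "(\<lambda>g. t_hat K W q c j g) \<in> borel_measurable borel"
  unfolding t_hat_SUP
proof (rule borel_measurable_SUP)
  show "countable {t. t \<in> \<rat> \<and> 0 \<le> t}"
    by (rule countable_subset[OF _ countable_rat]) auto
  fix t :: real
  show "(\<lambda>g. if phi K W q c j (ereal t) g \<le> 0 then ereal t else 0) \<in> borel_measurable borel"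
    by measurable
qed

lemma t_hat_meas[measurable (raw)]:
  "f \<in> M \<rightarrow>\<^sub>M borel \<Longrightarrow> (\<lambda>x. t_hat K W q c j (f x)) \<in> borel_measurable M"
  using measurable_compose[OF _ t_hat_meas0] .

lemma EV_meas0: "(\<lambda>x. EV K W q c j (fst x) (snd x)) \<in> borel_measurable (borel :: (((real^'p) \<times> real) \<times> (real^'p)) measure)"
  unfolding EV_def Let_def by measurable

lemma nnA_le: assumes "phi K W q c j t g \<le> 0"
  shows "(\<integral>\<^sup>+ y. ennreal (real CARD('p) * Aterm q c t j (W y)) \<partial>K j g)
       \<le> (\<integral>\<^sup>+ y. ennreal (real CARD('p) * Bterm q c j (W y)) \<partial>K j g)"
proof -
  have "(\<integral>\<^sup>+ y. ennreal (real CARD('p) * Aterm q c t j (W y)) \<partial>K j g)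
      = ennreal (\<integral>y. real CARD('p) * Aterm q c t j (W y) \<partial>K j g)"
    using intA by (intro nn_integral_eq_integral) (auto simp: Aterm_nonneg[OF c_nonneg])
  also have "\<dots> = ennreal (real CARD('p) * (\<integral>y. Aterm q c t j (W y) \<partial>K j g))" by simp
  also have "\<dots> \<le> ennreal (real CARD('p) * (\<integral>y. Bterm q c j (W y) \<partial>K j g))"
    using assms unfolding phi_AB by (intro ennreal_leI mult_left_mono) auto
  also have "\<dots> = ennreal (\<integral>y. real CARD('p) * Bterm q c j (W y) \<partial>K j g)" by simp
  also have "\<dots> = (\<integral>\<^sup>+ y. ennreal (real CARD('p) * Bterm q c j (W y)) \<partial>K j g)"
    using intB by (intro nn_integral_eq_integral[symmetric]) (auto simp: Bterm_nonneg)
  finally show ?thesis .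
qed

lemma per_g: "(\<integral>\<^sup>+ y. ennreal (EV K W q c j g (W y)) \<partial>K j g)
    \<le> (\<integral>\<^sup>+ y. ennreal (real CARD('p) * Bterm q c j (W y)) \<partial>K j g)"
proof (cases "phi K W q c j (t_hat K W q c j g) g \<le> 0")
  case True
  have "\<And>w. EV K W q c j g w = real CARD('p) * Aterm q c (t_hat K W q c j g) j w"
    using True unfolding EV_def Aterm_def Let_def by simp
  then show ?thesis using nnA_le[OF True] by simp
next
  case False
  let ?th = "t_hat K W q c j g"
  have "?th \<noteq> 0" using False phi_zero[of j g] by auto
  then have th0: "0 < ?th" using t_hat_nonneg[of j g] by simp
  obtain X :: "nat \<Rightarrow> real" where X: "incseq X" "\<And>i. 0 < X i" "\<And>i. X i < ?th" "(\<lambda>i. ereal (X i)) \<longlonglongrightarrow> ?th"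
    using ereal_incseq_approx[OF th0] by (metis zero_ereal_def ereal_less(2))
  have phiX: "phi K W q c j (ereal (X i)) g \<le> 0" for i
    using t_hat_below X(2,3) by (simp add: less_imp_le)
  have pw: "ennreal (EV K W q c j g w) = (SUP i. ennreal (real CARD('p) * Aterm q c (ereal (X i)) j w))" for w
  proof -
    let ?v = "real CARD('p) / (c + negc q c w)"
    have v0: "0 \<le> ?v" using c_nonneg negc_nonneg[of q c w] by simp
    have E: "EV K W q c j g w = (if knock_T q c w < ?th * ereal (w$j) then ?v else 0)"
      using False unfolding EV_def Let_def by simp
    have A: "real CARD('p) * Aterm q c (ereal (X i)) j w = (if knock_T q c w \<le> ereal (X i) * ereal (w$j) then ?v else 0)" for i
      unfolding Aterm_def by simp
    have eq: "(\<exists>i. knock_T q c w \<le> ereal (X i) * ereal (w$j)) \<longleftrightarrow> knock_T q c w < ?th * ereal (w$j)"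
      by (rule sup_equiv[OF knock_T_pos X(2) X(3) X(4)])
    show ?thesis
    proof (cases "knock_T q c w < ?th * ereal (w$j)")
      case True
      then obtain i0 where i0: "knock_T q c w \<le> ereal (X i0) * ereal (w$j)" using eq by blast
      have "(SUP i. ennreal (if knock_T q c w \<le> ereal (X i) * ereal (w$j) then ?v else 0)) = ennreal ?v"
      proof (rule antisym)
        show "(SUP i. ennreal (if knock_T q c w \<le> ereal (X i) * ereal (w$j) then ?v else 0)) \<le> ennreal ?v"
          by (rule SUP_least) (auto simp: v0)
        show "ennreal ?v \<le> (SUP i. ennreal (if knock_T q c w \<le> ereal (X i) * ereal (w$j) then ?v else 0))"
          by (rule SUP_upper2[of i0]) (use i0 in auto)
      qed
      then show ?thesis unfolding E A using True by simp
    next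
      case False
      then have "\<forall>i. \<not> knock_T q c w \<le> ereal (X i) * ereal (w$j)" using eq by blast
      then show ?thesis unfolding E A using False by simp
    qed
  qed
  have inc: "incseq (\<lambda>i y. ennreal (real CARD('p) * Aterm q c (ereal (X i)) j (W y)))"
  proof (intro monoI le_funI ennreal_leI mult_left_mono Aterm_mono[OF c_nonneg])
    fix i k :: nat and y assume "i \<le> k"
    then show "ereal (X i) \<le> ereal (X k)" using X(1) by (simp add: incseq_def)
    show "0 \<le> ereal (X i)" using X(2)[of i] by simp
  qed simp
  have "(\<integral>\<^sup>+ y. ennreal (EV K W q c j g (W y)) \<partial>K j g)
      = (\<integral>\<^sup>+ y. (SUP i. ennreal (real CARD('p) * Aterm q c (ereal (X i)) j (W y))) \<partial>K j g)"
    by (simp add: pw)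
  also have "\<dots> = (SUP i. \<integral>\<^sup>+ y. ennreal (real CARD('p) * Aterm q c (ereal (X i)) j (W y)) \<partial>K j g)"
    by (rule nn_integral_monotone_convergence_SUP[OF inc]) (intro meas_K, measurable)
  also have "\<dots> \<le> (\<integral>\<^sup>+ y. ennreal (real CARD('p) * Bterm q c j (W y)) \<partial>K j g)"
    by (rule SUP_least) (rule nnA_le[OF phiX])
  finally show ?thesis .
qed

end




lemma normal_nn_1: "0 < s \<Longrightarrow> (\<integral>\<^sup>+ x. ennreal (normal_density m s x) \<partial>lborel) = 1"
proof -
  assume s: "0 < s"
  interpret prob_space "density lborel (normal_density m s)"
    using prob_space_normal_density[OF s] .
  have "emeasure (density lborel (normal_density m s)) UNIV = 1"
    using emeasure_space_1 by simp
  then show ?thesis by (simp add: emeasure_density)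
qed

lemma e2: "0 < (x::real) \<Longrightarrow> (x powr (-(1/2))) ^ n = x powr (-(1/2) * real n)"
  by (metis powr_powr powr_realpow powr_gt_zero)
lemma q1: fixes a :: "'b \<Rightarrow> real" shows "- (sum a A) / d = (\<Sum>b\<in>A. - a b / d)"
  by (subst sum_divide_distrib[symmetric]) (simp add: sum_negf)
lemma p2: fixes y mu :: "real^'n" shows "exp (- (\<Sum>b\<in>Basis. (y \<bullet> b - mu \<bullet> b)\<^sup>2) / (2 * s\<^sup>2)) = (\<Prod>b\<in>Basis. exp (- (y \<bullet> b - mu \<bullet> b)\<^sup>2 / (2 * s\<^sup>2)))"
  unfolding q1 by (rule exp_sum) simp

lemma dist_sq_sum: fixes y mu :: "real^'n" shows "(dist y mu) ^ 2 = (\<Sum>b\<in>Basis. (y \<bullet> b - mu \<bullet> b)^2)"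
proof -
  have "(dist y mu) ^ 2 = (y - mu) \<bullet> (y - mu)" by (simp only: dist_norm power2_norm_eq_inner)
  also have "\<dots> = (\<Sum>b\<in>Basis. ((y - mu) \<bullet> b) * ((y - mu) \<bullet> b))" by (rule euclidean_inner)
  also have "\<dots> = (\<Sum>b\<in>Basis. (y \<bullet> b - mu \<bullet> b)^2)" by (simp only: inner_diff_left power2_eq_square)
  finally show ?thesis .
qed

lemma iso_gauss_dens:
  fixes mu y :: "real^'n"
  assumes s: "0 < s"
  shows "(2 * pi * s^2) powr (- real CARD('n) / 2) * exp (- ((dist y mu) ^ 2) / (2 * s ^ 2))
       = (\<Prod>b\<in>Basis. normal_density (mu \<bullet> b) s (y \<bullet> b))"
proof -
  have cB: "card (Basis :: (real^'n) set) = CARD('n)"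
    using DIM_cart[where 'a=real and 'b='n] by simp
  note d = dist_sq_sum[of y mu]
  have pos: "0 < 2 * pi * s^2" using s by simp
  define x where "x = 2 * pi * s^2"
  have xpos: "0 < x" using pos x_def by simp
  have e1: "1 / sqrt x = x powr (-(1/2))"
    using xpos by (simp add: powr_minus_divide powr_half_sqrt)
  note e2 = e2[OF xpos, of "CARD('n)"]
  have "(2 * pi * s^2) powr (- real CARD('n) / 2) = (1 / sqrt (2 * pi * s^2)) ^ CARD('n)"
    unfolding x_def[symmetric] e1 e2 by simp
  also have "\<dots> = (\<Prod>b\<in>(Basis :: (real^'n) set). 1 / sqrt (2 * pi * s^2))" by (simp add: cB)
  finally have p1: "(2 * pi * s^2) powr (- real CARD('n) / 2) = (\<Prod>b\<in>(Basis :: (real^'n) set). 1 / sqrt (2 * pi * s^2))" .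
  have p2: "exp (- ((dist y mu) ^ 2) / (2 * s\<^sup>2)) = (\<Prod>b\<in>Basis. exp (- (y \<bullet> b - mu \<bullet> b)\<^sup>2 / (2 * s\<^sup>2)))"
    unfolding d power2_eq_square[symmetric] by (rule p2)
  show ?thesis unfolding p1 p2 normal_density_def prod.distrib[symmetric] ..
qed

lemma iso_gauss_prob: assumes s: "0 < s" shows "prob_space (iso_gauss (mu :: real^'n) s)"
proof
  have "emeasure (iso_gauss mu s) (space (iso_gauss mu s))
      = (\<integral>\<^sup>+ y. ennreal (\<Prod>b\<in>Basis. normal_density (mu \<bullet> b) s (y \<bullet> b)) \<partial>lborel)"
    unfolding iso_gauss_def iso_gauss_dens[OF s]
    by (simp add: emeasure_density)
  also have "\<dots> = (\<integral>\<^sup>+ y. (\<Prod>b\<in>Basis. ennreal (normal_density (mu \<bullet> b) s (y \<bullet> b))) \<partial>lborel)"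
    by (simp add: prod_ennreal)
  also have "\<dots> = (\<Prod>b\<in>(Basis :: (real^'n) set). (\<integral>\<^sup>+ x. ennreal (normal_density (mu \<bullet> b) s x) \<partial>lborel))"
    by (rule nn_integral_lborel_prod) auto
  also have "\<dots> = 1" using normal_nn_1[OF s] by simp
  finally show "emeasure (iso_gauss mu s) (space (iso_gauss mu s)) = 1" .
qed



lemma Gstat_cont: "continuous_on UNIV (Gstat X j)"
  unfolding Gstat_def
proof (intro continuous_intros continuous_on_vec_lambda)
  fix l
  show "continuous_on UNIV (\<lambda>x. if l = j then 0 else (transpose X *v x) $ l)"
  proof (cases "l = j")
    case False
    then show ?thesis
      using continuous_on_component[OF matrix_vector_mult_linear_continuous_on[of UNIV "transpose X"], of l]
      by simp
  qed simp
qed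
lemma Gstat_meas[measurable]: "Gstat X j \<in> borel_measurable borel"
  by (rule borel_measurable_continuous_onI[OF Gstat_cont])



lemma sort_desc_ex:
  fixes e :: "'p::finite \<Rightarrow> real"
  shows "\<exists>pi. bij_betw pi {1..CARD('p)} (UNIV::'p::finite set) \<and>
      (\<forall>i\<in>{1..CARD('p)}. \<forall>k\<in>{1..CARD('p)}. i \<le> k \<longrightarrow> e (pi k) \<le> e (pi i))"
proof -
  obtain h where h: "bij_betw h {1..CARD('p)} (UNIV::'p set)"
    using ex_bij_betw_nat_finite_1[of "UNIV::'p set"] by auto
  define ys where "ys = map h [1..<CARD('p)+1]"
  define xs where "xs = sort_key (\<lambda>x. - e x) ys"
  have setu: "set [1..<CARD('p)+1] = {1..CARD('p)}" by auto
  have dys: "distinct ys" unfolding ys_def distinct_map setu using h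
    by (simp add: bij_betw_def)
  have sys: "set ys = UNIV" unfolding ys_def set_map setu using h
    by (simp add: bij_betw_def)
  have lys: "length ys = CARD('p)" unfolding ys_def by simp
  have dxs: "distinct xs" and sxs: "set xs = UNIV" and lxs: "length xs = CARD('p)"
    using dys sys lys unfolding xs_def by auto
  have sorted: "sorted (map (\<lambda>x. - e x) xs)" unfolding xs_def by simp
  define pi where "pi k = xs ! (k - 1)" for k
  have b1: "bij_betw ((!) xs) {..<CARD('p)} UNIV"
    using bij_betw_nth[OF dxs _ sxs[symmetric]] lxs by simp
  have b2: "bij_betw (\<lambda>k. k - 1) {1..CARD('p)} {..<CARD('p)}"
    by (rule bij_betwI[where g="\<lambda>k. k + 1"]) auto
  have "bij_betw pi {1..CARD('p)} UNIV"
    unfolding pi_def using bij_betw_trans[OF b2 b1] by (simp add: comp_def)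
  moreover have "\<forall>i\<in>{1..CARD('p)}. \<forall>k\<in>{1..CARD('p)}. i \<le> k \<longrightarrow> e (pi k) \<le> e (pi i)"
  proof (intro ballI impI)
    fix i k assume "i \<in> {1..CARD('p)}" "k \<in> {1..CARD('p)}" "i \<le> k"
    then have "(map (\<lambda>x. - e x) xs) ! (i - 1) \<le> (map (\<lambda>x. - e x) xs) ! (k - 1)"
      using lxs by (intro sorted_nth_mono[OF sorted]) auto
    moreover have "i - 1 < length xs" "k - 1 < length xs" using \<open>i \<in> _\<close> \<open>k \<in> _\<close> lxs by auto
    ultimately show "e (pi k) \<le> e (pi i)" unfolding pi_def by simp
  qed
  ultimately show ?thesis by blast
qed

lemma sort_desc_prop: "bij_betw (sort_desc e) {1..CARD('p)} (UNIV::'p::finite set) \<and>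
      (\<forall>i\<in>{1..CARD('p)}. \<forall>k\<in>{1..CARD('p)}. i \<le> k \<longrightarrow> e (sort_desc e k) \<le> e (sort_desc e i))"
  unfolding sort_desc_def by (rule someI_ex[OF sort_desc_ex])

lemma fdp_bound:
  fixes e :: "'p::finite \<Rightarrow> real"
  assumes a: "0 < a" and e: "\<And>j. 0 \<le> e j"
  shows "fdp H (ebh a e) \<le> a / real CARD('p) * (\<Sum>j\<in>H. e j)"
proof -
  let ?n = "CARD('p)"
  let ?pi = "sort_desc e"
  let ?k = "ebh_khat a e"
  have bij: "bij_betw ?pi {1..?n} UNIV" and mono: "\<And>i k. i \<in> {1..?n} \<Longrightarrow> k \<in> {1..?n} \<Longrightarrow> i \<le> k \<Longrightarrow> e (?pi k) \<le> e (?pi i)"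
    using sort_desc_prop[of e] by auto
  have rhs0: "0 \<le> a / real ?n * (\<Sum>j\<in>H. e j)"
    using a e by (intro mult_nonneg_nonneg sum_nonneg) auto
  have kin: "?k \<in> {0} \<union> {k \<in> {1..?n}. real k * e (?pi k) / real ?n \<ge> 1 / a}"
    unfolding ebh_khat_def by (rule Max_in) auto
  show ?thesis
  proof (cases "?k = 0")
    case True
    then have "ebh a e = {}" unfolding ebh_def by simp
    then show ?thesis using rhs0 by (simp add: fdp_def)
  next
    case False
    with kin have k1: "1 \<le> ?k" "?k \<le> ?n" and kge: "real ?k * e (?pi ?k) / real ?n \<ge> 1 / a" by auto
    have npos: "0 < real ?n" by simp
    define S where "S = ebh a e"
    have S: "S = ?pi ` {1..?k}" unfolding S_def ebh_def ..
    have cardS: "card S = ?k"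
    proof -
      have "inj_on ?pi {1..?k}" using bij k1 unfolding bij_betw_def
        by (rule_tac inj_on_subset) auto
      then show ?thesis unfolding S by (simp add: card_image)
    qed
    have ej: "1 / real ?k \<le> a / real ?n * e j" if "j \<in> S" for j
    proof -
      obtain i where i: "i \<in> {1..?k}" "j = ?pi i" using \<open>j \<in> S\<close> S by auto
      have "e (?pi ?k) \<le> e j" using i k1 by (intro mono[of i ?k, folded i(2)]) auto
      have "1 \<le> a * (real ?k * e (?pi ?k) / real ?n)"
        using kge a by (simp add: field_simps)
      also have "\<dots> \<le> a * (real ?k * e j / real ?n)"
        using \<open>e (?pi ?k) \<le> e j\<close> a npos by (intro mult_left_mono divide_right_mono) auto
      finally have "1 \<le> a * (real ?k * e j / real ?n)" .
      then show ?thesis using k1 npos by (simp add: field_simps)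
    qed
    have "fdp H S = real (card (S \<inter> H)) / real ?k" unfolding fdp_def cardS using k1 by simp
    also have "\<dots> = (\<Sum>j\<in>S \<inter> H. 1 / real ?k)" by simp
    also have "\<dots> \<le> (\<Sum>j\<in>S \<inter> H. a / real ?n * e j)" by (rule sum_mono) (rule ej, simp)
    also have "\<dots> \<le> (\<Sum>j\<in>H. a / real ?n * e j)"
      using a e by (intro sum_mono2) auto
    also have "\<dots> = a / real ?n * (\<Sum>j\<in>H. e j)" by (simp add: sum_distrib_left)
    finally show ?thesis unfolding S_def .
  qed
qed


lemma dis:
  fixes X :: "real^'p^'n" and K :: "'p \<Rightarrow> (real^'p) \<times> real \<Rightarrow> (real^'n) measure" and M :: "(real^'n) measure"
    and F :: "((real^'p) \<times> real) \<times> (real^'n) \<Rightarrow> ennreal"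
  assumes Kk: "K j \<in> borel \<rightarrow>\<^sub>M prob_algebra borel"
    and Kc: "distr M borel (\<lambda>y. (Gstat X j y, y)) = distr M borel (Gstat X j) \<bind> (\<lambda>g. distr (K j g) borel (\<lambda>y. (g, y)))"
    and sM: "sets M = sets borel"
    and F: "F \<in> borel_measurable borel"
  shows "(\<integral>\<^sup>+ y. F (Gstat X j y, y) \<partial>M) = (\<integral>\<^sup>+ g. \<integral>\<^sup>+ y. F (g, y) \<partial>K j g \<partial>distr M borel (Gstat X j))"
proof -
  have m0: "(\<lambda>y. (Gstat X j y, y)) \<in> borel \<rightarrow>\<^sub>M borel" by measurable
  then have m1: "(\<lambda>y. (Gstat X j y, y)) \<in> M \<rightarrow>\<^sub>M borel"
    using measurable_cong_sets[OF sM refl] by blast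
  have N0: "(\<lambda>g. distr (K j g) borel (\<lambda>y. (g, y))) \<in> borel \<rightarrow>\<^sub>M subprob_algebra borel"
  proof (rule measurable_distr2[where M=borel])
    show "(\<lambda>(x, y). (x, y)) \<in> (borel :: ((real^'p) \<times> real) measure) \<Otimes>\<^sub>M (borel :: (real^'n) measure) \<rightarrow>\<^sub>M borel"
      by (simp add: borel_prod)
    show "K j \<in> borel \<rightarrow>\<^sub>M subprob_algebra borel" by (rule measurable_prob_algebraD[OF Kk])
  qed
  have N: "(\<lambda>g. distr (K j g) borel (\<lambda>y. (g, y))) \<in> distr M borel (Gstat X j) \<rightarrow>\<^sub>M subprob_algebra borel"
    using N0 measurable_cong_sets[of "distr M borel (Gstat X j)" borel] by simp
  have Ks: "sets (K j g) = sets borel" for g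
    using measurable_space[OF Kk, of g] by (simp add: space_prob_algebra)
  have P: "(\<lambda>y. (g, y)) \<in> K j g \<rightarrow>\<^sub>M borel" for g
  proof -
    have "(\<lambda>y. (g, y)) \<in> (borel :: (real^'n) measure) \<rightarrow>\<^sub>M borel" by measurable
    then show ?thesis using measurable_cong_sets[OF Ks refl] by blast
  qed
  have "(\<integral>\<^sup>+ y. F (Gstat X j y, y) \<partial>M) = (\<integral>\<^sup>+ z. F z \<partial>distr M borel (\<lambda>y. (Gstat X j y, y)))"
    by (rule nn_integral_distr[symmetric]) (simp_all add: m1 F)
  also have "\<dots> = (\<integral>\<^sup>+ z. F z \<partial>(distr M borel (Gstat X j) \<bind> (\<lambda>g. distr (K j g) borel (\<lambda>y. (g, y)))))"
    by (simp only: Kc)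
  also have "\<dots> = (\<integral>\<^sup>+ g. \<integral>\<^sup>+ z. F z \<partial>distr (K j g) borel (\<lambda>y. (g, y)) \<partial>distr M borel (Gstat X j))"
    by (rule nn_integral_bind[OF F N])
  also have "\<dots> = (\<integral>\<^sup>+ g. \<integral>\<^sup>+ y. F (g, y) \<partial>K j g \<partial>distr M borel (Gstat X j))"
    by (intro nn_integral_cong nn_integral_distr) (simp_all add: P F)
  finally show ?thesis .
qed

lemma Bsum: "(\<Sum>j\<in>H. Bterm q c j w) \<le> 1"
proof -
  have "(\<Sum>j\<in>H. Bterm q c j w) \<le> (\<Sum>j\<in>UNIV. Bterm q c j w)"
    by (intro sum_mono2) (auto simp: Bterm_nonneg)
  also have "\<dots> = (\<Sum>j\<in>UNIV. (if ereal (w $ j) \<le> - knock_T q c w then 1 else 0)) / negc q c w"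
    unfolding Bterm_def by (simp add: sum_divide_distrib)
  also have "\<dots> = negc q c w / negc q c w"
    unfolding negc_def neg_count_real ..
  also have "\<dots> \<le> 1" by simp
  finally show ?thesis .
qed

theorem proposition2p3:
  fixes X :: "real^'p^'n" and b :: "real^'p" and s q c :: real
    and W :: "real^'n \<Rightarrow> real^'p"
    and K :: "'p \<Rightarrow> (real^'p) \<times> real \<Rightarrow> (real^'n) measure"
  assumes full_rank: "rank X = CARD('p)"
    and s_pos: "s > 0"
    and W_meas: "W \<in> borel_measurable borel"
    and q: "0 < q" "q < 1"
    and c: "c \<ge> 0"
    and K_kernel: "\<And>j. K j \<in> borel \<rightarrow>\<^sub>M prob_algebra borel"
    and K_cond: "\<And>j b' s'. b' $ j = 0 \<Longrightarrow> s' > 0 \<Longrightarrow>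
        distr (iso_gauss (X *v b') s') borel (\<lambda>y. (Gstat X j y, y))
      = distr (iso_gauss (X *v b') s') borel (Gstat X j)
          \<bind> (\<lambda>g. distr (K j g) borel (\<lambda>y. (g, y)))"
  shows "((\<Sum>j\<in>{j. b $ j = 0}. \<integral>\<^sup>+ y. ennreal (evalue X K W q c j y) \<partial>(iso_gauss (X *v b) s))
           \<le> ennreal (real CARD('p)))
     \<and> (\<forall>a. 0 < a \<and> a < 1 \<longrightarrow>
           (\<integral>\<^sup>+ y. ennreal (fdp {j. b $ j = 0} (ebh a (\<lambda>j. evalue X K W q c j y)))
              \<partial>(iso_gauss (X *v b) s)) \<le> ennreal a)"
proof -
  let ?mu = "iso_gauss (X *v b) s"
  let ?H = "{j. b $ j = 0}"
  let ?p = "real CARD('p)"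
  note Wm[measurable] = W_meas
  interpret P: prob_space ?mu by (rule iso_gauss_prob[OF s_pos])
  have smu: "sets ?mu = sets borel" unfolding iso_gauss_def by simp
  have mmu: "f \<in> borel_measurable borel \<Longrightarrow> f \<in> borel_measurable ?mu" for f :: "real^'n \<Rightarrow> ennreal"
    using measurable_cong_sets[OF smu refl] by blast
  have EVm: "(\<lambda>x. EV K W q c j (fst x) (snd x)) \<in> borel_measurable (borel :: (((real^'p) \<times> real) \<times> (real^'p)) measure)" for j
    by (rule EV_meas0[OF W_meas c K_kernel])
  have ev_meas: "(\<lambda>y. ennreal (evalue X K W q c j y)) \<in> borel_measurable borel" for j
  proof -
    have "(\<lambda>y. EV K W q c j (fst (Gstat X j y, W y)) (snd (Gstat X j y, W y))) \<in> borel_measurable borel"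
      by (rule measurable_compose[OF _ EVm]) measurable
    then show ?thesis unfolding evalue_EV by simp
  qed
  have per_j: "(\<integral>\<^sup>+ y. ennreal (evalue X K W q c j y) \<partial>?mu)
      \<le> (\<integral>\<^sup>+ y. ennreal (?p * Bterm q c j (W y)) \<partial>?mu)" if j: "b $ j = 0" for j
  proof -
    note Kc = K_cond[OF j s_pos]
    have F1: "(\<lambda>z. ennreal (EV K W q c j (fst z) (W (snd z)))) \<in> borel_measurable (borel :: (((real^'p) \<times> real) \<times> (real^'n)) measure)"
    proof -
      have "(\<lambda>z. EV K W q c j (fst (fst z, W (snd z))) (snd (fst z, W (snd z)))) \<in> borel_measurable (borel :: (((real^'p) \<times> real) \<times> (real^'n)) measure)"
        by (rule measurable_compose[OF _ EVm]) measurable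
      then show ?thesis by simp
    qed
    have F2: "(\<lambda>z. ennreal (?p * Bterm q c j (W (snd z)))) \<in> borel_measurable (borel :: (((real^'p) \<times> real) \<times> (real^'n)) measure)"
      by measurable
    have "(\<integral>\<^sup>+ y. ennreal (evalue X K W q c j y) \<partial>?mu)
        = (\<integral>\<^sup>+ y. (\<lambda>z. ennreal (EV K W q c j (fst z) (W (snd z)))) (Gstat X j y, y) \<partial>?mu)"
      unfolding evalue_EV by simp
    also have "\<dots> = (\<integral>\<^sup>+ g. \<integral>\<^sup>+ y. ennreal (EV K W q c j g (W y)) \<partial>K j g \<partial>distr ?mu borel (Gstat X j))"
      by (subst dis[where K=K and j=j and X=X and F="\<lambda>z. ennreal (EV K W q c j (fst z) (W (snd z)))", OF K_kernel[of j] Kc smu F1]) simp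
    also have "\<dots> \<le> (\<integral>\<^sup>+ g. \<integral>\<^sup>+ y. ennreal (?p * Bterm q c j (W y)) \<partial>K j g \<partial>distr ?mu borel (Gstat X j))"
      by (intro nn_integral_mono per_g[OF W_meas c K_kernel])
    also have "\<dots> = (\<integral>\<^sup>+ y. (\<lambda>z. ennreal (?p * Bterm q c j (W (snd z)))) (Gstat X j y, y) \<partial>?mu)"
      by (subst dis[where K=K and j=j and X=X and F="\<lambda>z. ennreal (?p * Bterm q c j (W (snd z)))", OF K_kernel[of j] Kc smu F2]) simp
    also have "\<dots> = (\<integral>\<^sup>+ y. ennreal (?p * Bterm q c j (W y)) \<partial>?mu)" by simp
    finally show ?thesis .
  qed
  have part1: "(\<Sum>j\<in>?H. \<integral>\<^sup>+ y. ennreal (evalue X K W q c j y) \<partial>?mu) \<le> ennreal ?p"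
  proof -
    have "(\<Sum>j\<in>?H. \<integral>\<^sup>+ y. ennreal (evalue X K W q c j y) \<partial>?mu)
        \<le> (\<Sum>j\<in>?H. \<integral>\<^sup>+ y. ennreal (?p * Bterm q c j (W y)) \<partial>?mu)"
      by (intro sum_mono per_j) simp
    also have "\<dots> = (\<integral>\<^sup>+ y. (\<Sum>j\<in>?H. ennreal (?p * Bterm q c j (W y))) \<partial>?mu)"
      by (rule nn_integral_sum[symmetric]) (intro mmu, measurable)
    also have "\<dots> \<le> (\<integral>\<^sup>+ y. ennreal ?p \<partial>?mu)"
    proof (intro nn_integral_mono)
      fix y
      have "(\<Sum>j\<in>?H. ennreal (?p * Bterm q c j (W y))) = ennreal (\<Sum>j\<in>?H. ?p * Bterm q c j (W y))"
        by (rule sum_ennreal) (simp add: Bterm_nonneg)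
      also have "\<dots> = ennreal (?p * (\<Sum>j\<in>?H. Bterm q c j (W y)))" by (simp add: sum_distrib_left)
      also have "\<dots> \<le> ennreal (?p * 1)"
        by (intro ennreal_leI mult_left_mono Bsum) simp
      finally show "(\<Sum>j\<in>?H. ennreal (?p * Bterm q c j (W y))) \<le> ennreal ?p" by simp
    qed
    also have "\<dots> = ennreal ?p" by (simp add: P.emeasure_space_1)
    finally show ?thesis .
  qed
  have part2: "(\<integral>\<^sup>+ y. ennreal (fdp ?H (ebh a (\<lambda>j. evalue X K W q c j y))) \<partial>?mu) \<le> ennreal a"
    if a: "0 < a" "a < 1" for a
  proof -
    have e0: "0 \<le> evalue X K W q c j y" for j y
      unfolding evalue_EV by (rule EV_nonneg[OF c])
    have "(\<integral>\<^sup>+ y. ennreal (fdp ?H (ebh a (\<lambda>j. evalue X K W q c j y))) \<partial>?mu)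
        \<le> (\<integral>\<^sup>+ y. ennreal (a / ?p * (\<Sum>j\<in>?H. evalue X K W q c j y)) \<partial>?mu)"
      by (intro nn_integral_mono ennreal_leI fdp_bound a e0)
    also have "\<dots> = (\<integral>\<^sup>+ y. ennreal (a / ?p) * (\<Sum>j\<in>?H. ennreal (evalue X K W q c j y)) \<partial>?mu)"
    proof (intro nn_integral_cong)
      fix y
      have S0: "0 \<le> (\<Sum>j\<in>?H. evalue X K W q c j y)" by (intro sum_nonneg e0)
      have "ennreal (a / ?p * (\<Sum>j\<in>?H. evalue X K W q c j y)) = ennreal (a / ?p) * ennreal (\<Sum>j\<in>?H. evalue X K W q c j y)"
        by (rule ennreal_mult) (use a S0 in simp_all)
      also have "ennreal (\<Sum>j\<in>?H. evalue X K W q c j y) = (\<Sum>j\<in>?H. ennreal (evalue X K W q c j y))"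
        by (rule sum_ennreal[symmetric]) (simp add: e0)
      finally show "ennreal (a / ?p * (\<Sum>j\<in>?H. evalue X K W q c j y)) = ennreal (a / ?p) * (\<Sum>j\<in>?H. ennreal (evalue X K W q c j y))" .
    qed
    also have "\<dots> = ennreal (a / ?p) * (\<integral>\<^sup>+ y. (\<Sum>j\<in>?H. ennreal (evalue X K W q c j y)) \<partial>?mu)"
    proof (rule nn_integral_cmult, rule mmu)
      note ev_meas[measurable]
      show "(\<lambda>y. \<Sum>j\<in>?H. ennreal (evalue X K W q c j y)) \<in> borel_measurable borel" by measurable
    qed
    also have "\<dots> = ennreal (a / ?p) * (\<Sum>j\<in>?H. \<integral>\<^sup>+ y. ennreal (evalue X K W q c j y) \<partial>?mu)"
      by (subst nn_integral_sum) (auto intro: mmu ev_meas)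
    also have "\<dots> \<le> ennreal (a / ?p) * ennreal ?p"
      by (intro mult_left_mono part1) simp
    also have "\<dots> = ennreal a"
      using a by (simp flip: ennreal_mult)
    finally show ?thesis .
  qed
  show ?thesis using part1 part2 by blast
qed

end
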